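(* Consider an instance of the Balancing with Conflicts and Friendship game with $n$ players, $m$ machines and parameters $\alpha>0$, $\beta,\gamma\ge0$. (i) If $\alpha\ge\gamma$, the instance is $(\Lambda,0)$-semi-smooth, where $$\Lambda=1+\frac{m-1}{n}+\frac\beta\alpha\cdot\frac{m-1}{m}+\frac\gamma\alpha\left(\frac{m-1}{m}-\frac{m-1}{n}\right).$$ Hence its price of total anarchy is at most $\Lambda$. (ii) The bound in (i) is tight. For every $m\ge1$ and every $\alpha\ge\gamma$ and $\beta$, take $n=m^2$ players partitioned into $m$ disjoint groups of $m$ players. Let $E^+$ join every two players in the same group and $E^-$ join every two players in different groups. Then the mixed profile in which each player independently chooses each machine with probability $\frac1m$ is a mixed Nash equilibrium whose expected social cost equals $\Lambda\, c(\vec s^* )$. (iii) If $\alpha<\gamma$, the instance is $$\left(1+\frac\beta\alpha\cdot\frac{m-1}{m}+\frac\gamma\alpha\cdot\frac{m-1}{m},\;0\right)\text{-semi-smooth.}$$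
   Context: An instance of the Balancing with Conflicts and Friendship game consists of: - players $N=\{1,\dots,n\}$; - machines $M=\{1,\dots,m\}$; - two disjoint sets $E^+$ (friendship edges) and $E^-$ (conflict edges) of unordered pairs of distinct players; - parameters $\alpha>0$, $\beta\ge0$, $\gamma\ge0$. A state is $\vec s\in M^n$, with $X_k(\vec s)=\{i:s_i=k\}$ and $x_k(\vec s)=|X_k(\vec s)|$. The cost of player $i$ with $s_i=k$ is $$c_i(\vec s)=\alpha x_k(\vec s)+\beta\cdot\#\{j\in X_k(\vec s):\{i,j\}\in E^-\}+\gamma\cdot\#\{j\notin X_k(\vec s):\{i,j\}\in E^+\}.$$ The social cost is $c(\vec s)=\sum_ic_i(\vec s)$, and $\vec s^*$ minimizes $c$. A cost-minimization game is $(\lambda,\mu)$-semi-smooth if there exist probability distributions $\sigma_i$ over each player's strategies such that for every state $\vec s$, $$\sum_i\mathbf E_{s_i'\sim\sigma_i}[c_i(s_i',\vec s_{-i})]\le\lambda c(\vec s^* )+\mu c(\vec s).$$ A coarse correlated equilibrium (CCE) is a distribution $\sigma$ over states with $\mathbf E_{\vec s\sim\sigma}[c_i(\vec s)]\le\mathbf E_{\vec s\sim\sigma}[c_i(s_i',\vec s_{-i})]$ for all $i$ and $s_i'$. A mixed Nash equilibrium is a CCE that is a product distribution. The price of total anarchy is $\sup_\sigma\mathbf E_{\vec s\sim\sigma}[c(\vec s)]/c(\vec s^* )$ over CCE $\sigma$. *)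

theory Defs
  imports Main "HOL-Library.FuncSet" Complex_Main
begin

text \<open>Players are 0..<n, machines are 0..<m. An edge is an unordered pair {i,j}
 of distinct players, represented as a two-element set.
 A state is an element of the extensional function space states n m.\<close>

definition states :: "nat \<Rightarrow> nat \<Rightarrow> (nat \<Rightarrow> nat) set" where
  "states n m = PiE {..<n} (\<lambda>_. {..<m})"

definition valid_instance :: "nat \<Rightarrow> nat \<Rightarrow> nat set set \<Rightarrow> nat set set \<Rightarrow> real \<Rightarrow> real \<Rightarrow> real \<Rightarrow> bool" where
  "valid_instance n m Ep Em \<alpha> \<beta> \<gamma> \<longleftrightarrow>
     1 \<le> n \<and> 1 \<le> m \<and>
     Ep \<subseteq> {{i, j} | i j. i < n \<and> j < n \<and> i \<noteq> j} \<and>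
     Em \<subseteq> {{i, j} | i j. i < n \<and> j < n \<and> i \<noteq> j} \<and>
     Ep \<inter> Em = {} \<and> \<alpha> > 0 \<and> \<beta> \<ge> 0 \<and> \<gamma> \<ge> 0"

definition load :: "nat \<Rightarrow> (nat \<Rightarrow> nat) \<Rightarrow> nat \<Rightarrow> nat" where
  "load n s k = card {j. j < n \<and> s j = k}"

definition pcost :: "nat \<Rightarrow> nat set set \<Rightarrow> nat set set \<Rightarrow> real \<Rightarrow> real \<Rightarrow> real
    \<Rightarrow> (nat \<Rightarrow> nat) \<Rightarrow> nat \<Rightarrow> real" where
  "pcost n Ep Em \<alpha> \<beta> \<gamma> s i =
     \<alpha> * real (load n s (s i))
     + \<beta> * real (card {j. j < n \<and> s j = s i \<and> {i, j} \<in> Em})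
     + \<gamma> * real (card {j. j < n \<and> s j \<noteq> s i \<and> {i, j} \<in> Ep})"

definition social_cost :: "nat \<Rightarrow> nat set set \<Rightarrow> nat set set \<Rightarrow> real \<Rightarrow> real \<Rightarrow> real
    \<Rightarrow> (nat \<Rightarrow> nat) \<Rightarrow> real" where
  "social_cost n Ep Em \<alpha> \<beta> \<gamma> s = (\<Sum>i<n. pcost n Ep Em \<alpha> \<beta> \<gamma> s i)"

definition opt_cost :: "nat \<Rightarrow> nat \<Rightarrow> nat set set \<Rightarrow> nat set set \<Rightarrow> real \<Rightarrow> real \<Rightarrow> real \<Rightarrow> real" where
  "opt_cost n m Ep Em \<alpha> \<beta> \<gamma> = Min (social_cost n Ep Em \<alpha> \<beta> \<gamma> ` states n m)"

definition machine_dist :: "nat \<Rightarrow> (nat \<Rightarrow> real) \<Rightarrow> bool" where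
  "machine_dist m p \<longleftrightarrow> (\<forall>k<m. p k \<ge> 0) \<and> (\<Sum>k<m. p k) = 1"

definition semi_smooth :: "nat \<Rightarrow> nat \<Rightarrow> nat set set \<Rightarrow> nat set set \<Rightarrow> real \<Rightarrow> real \<Rightarrow> real
    \<Rightarrow> real \<Rightarrow> real \<Rightarrow> bool" where
  "semi_smooth n m Ep Em \<alpha> \<beta> \<gamma> lam mu \<longleftrightarrow>
     (\<exists>\<sigma> :: nat \<Rightarrow> nat \<Rightarrow> real. (\<forall>i<n. machine_dist m (\<sigma> i)) \<and>
        (\<forall>s\<in>states n m.
           (\<Sum>i<n. \<Sum>k<m. \<sigma> i k * pcost n Ep Em \<alpha> \<beta> \<gamma> (s(i := k)) i)
             \<le> lam * opt_cost n m Ep Em \<alpha> \<beta> \<gamma> + mu * social_cost n Ep Em \<alpha> \<beta> \<gamma> s))"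

definition state_dist :: "nat \<Rightarrow> nat \<Rightarrow> ((nat \<Rightarrow> nat) \<Rightarrow> real) \<Rightarrow> bool" where
  "state_dist n m w \<longleftrightarrow> (\<forall>s\<in>states n m. w s \<ge> 0) \<and> (\<Sum>s\<in>states n m. w s) = 1"

definition expected :: "nat \<Rightarrow> nat \<Rightarrow> ((nat \<Rightarrow> nat) \<Rightarrow> real) \<Rightarrow> ((nat \<Rightarrow> nat) \<Rightarrow> real) \<Rightarrow> real" where
  "expected n m w f = (\<Sum>s\<in>states n m. w s * f s)"

definition is_CCE :: "nat \<Rightarrow> nat \<Rightarrow> nat set set \<Rightarrow> nat set set \<Rightarrow> real \<Rightarrow> real \<Rightarrow> real
    \<Rightarrow> ((nat \<Rightarrow> nat) \<Rightarrow> real) \<Rightarrow> bool" where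
  "is_CCE n m Ep Em \<alpha> \<beta> \<gamma> w \<longleftrightarrow> state_dist n m w \<and>
     (\<forall>i<n. \<forall>k<m.
        expected n m w (\<lambda>s. pcost n Ep Em \<alpha> \<beta> \<gamma> s i)
          \<le> expected n m w (\<lambda>s. pcost n Ep Em \<alpha> \<beta> \<gamma> (s(i := k)) i))"

definition product_dist :: "nat \<Rightarrow> (nat \<Rightarrow> nat \<Rightarrow> real) \<Rightarrow> (nat \<Rightarrow> nat) \<Rightarrow> real" where
  "product_dist n \<sigma> s = (\<Prod>i<n. \<sigma> i (s i))"

definition is_mixed_NE :: "nat \<Rightarrow> nat \<Rightarrow> nat set set \<Rightarrow> nat set set \<Rightarrow> real \<Rightarrow> real \<Rightarrow> real
    \<Rightarrow> (nat \<Rightarrow> nat \<Rightarrow> real) \<Rightarrow> bool" where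
  "is_mixed_NE n m Ep Em \<alpha> \<beta> \<gamma> \<sigma> \<longleftrightarrow> (\<forall>i<n. machine_dist m (\<sigma> i)) \<and>
     is_CCE n m Ep Em \<alpha> \<beta> \<gamma> (product_dist n \<sigma>)"

definition PoTA_le :: "nat \<Rightarrow> nat \<Rightarrow> nat set set \<Rightarrow> nat set set \<Rightarrow> real \<Rightarrow> real \<Rightarrow> real \<Rightarrow> real \<Rightarrow> bool" where
  "PoTA_le n m Ep Em \<alpha> \<beta> \<gamma> B \<longleftrightarrow>
     (\<forall>w. is_CCE n m Ep Em \<alpha> \<beta> \<gamma> w \<longrightarrow>
        expected n m w (social_cost n Ep Em \<alpha> \<beta> \<gamma>) \<le> B * opt_cost n m Ep Em \<alpha> \<beta> \<gamma>)"

definition Lam :: "nat \<Rightarrow> nat \<Rightarrow> real \<Rightarrow> real \<Rightarrow> real \<Rightarrow> real" where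
  "Lam n m \<alpha> \<beta> \<gamma> = 1 + (real m - 1) / real n + \<beta> / \<alpha> * ((real m - 1) / real m)
      + \<gamma> / \<alpha> * ((real m - 1) / real m - (real m - 1) / real n)"

text \<open>Tight instance: n = m^2 players, group of player i is i div m.\<close>
definition tight_Ep :: "nat \<Rightarrow> nat set set" where
  "tight_Ep m = {{i, j} | i j. i < m^2 \<and> j < m^2 \<and> i \<noteq> j \<and> i div m = j div m}"

definition tight_Em :: "nat \<Rightarrow> nat set set" where
  "tight_Em m = {{i, j} | i j. i < m^2 \<and> j < m^2 \<and> i div m \<noteq> j div m}"

end

theory Submission imports Defs begin


definition ind :: "bool \<Rightarrow> real" where "ind P = (if P then 1 else 0)"

lemma ind_conj: "ind (A \<and> B) = ind A * ind B" by (simp add: ind_def)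
lemma ind_not: "ind (\<not> A) = 1 - ind A" by (simp add: ind_def)

lemma card_ind: "real (card {j. j < (n::nat) \<and> P j}) = (\<Sum>j<n. ind (P j))"
proof -
  have e: "{j. j < n \<and> P j} = {j\<in>{..<n}. P j}" by auto
  have "(\<Sum>j<n. ind (P j)) = (\<Sum>j\<in>{j\<in>{..<n}. P j}. (1::real))" unfolding ind_def by (rule sum.inter_filter[symmetric]) simp
  then show ?thesis by simp
qed

lemma pcost_sum: "pcost n Ep Em \<alpha> \<beta> \<gamma> s i =
  (\<Sum>j<n. \<alpha> * ind (s j = s i) + \<beta> * ind (s j = s i \<and> {i,j} \<in> Em) + \<gamma> * ind (s j \<noteq> s i \<and> {i,j} \<in> Ep))"
  unfolding pcost_def load_def
  by (simp add: card_ind sum.distrib sum_distrib_left)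

lemma sum_ind_eq: "(x::nat) < m \<Longrightarrow> (\<Sum>k<m. ind (x = k)) = 1"
  by (simp add: ind_def)

lemma sum_ind_neq: "(x::nat) < m \<Longrightarrow> (\<Sum>k<m. ind (x \<noteq> k)) = real m - 1"
  by (simp add: ind_not sum_subtractf sum_ind_eq)

lemma states_lt: "s \<in> states n m \<Longrightarrow> j < n \<Longrightarrow> s j < m"
  by (auto simp: states_def PiE_def Pi_def)

lemma noself: "valid_instance n m Ep Em \<alpha> \<beta> \<gamma> \<Longrightarrow> {i} \<notin> Em \<and> {i} \<notin> Ep"
  unfolding valid_instance_def by (auto simp: doubleton_eq_iff)

definition Tpl :: "nat \<Rightarrow> nat \<Rightarrow> nat set set \<Rightarrow> nat set set \<Rightarrow> real \<Rightarrow> real \<Rightarrow> real \<Rightarrow> nat \<Rightarrow> real" where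
  "Tpl n m Ep Em \<alpha> \<beta> \<gamma> i = (\<Sum>j<n. if j = i then real m * \<alpha> else \<alpha> + \<beta> * ind ({i,j}\<in>Em) + \<gamma> * (real m - 1) * ind ({i,j}\<in>Ep))"

lemma dev_sum:
  assumes s: "s \<in> states n m" and i: "i < n" and ns: "{i} \<notin> Em"
  shows "(\<Sum>k<m. pcost n Ep Em \<alpha> \<beta> \<gamma> (s(i:=k)) i) = Tpl n m Ep Em \<alpha> \<beta> \<gamma> i"
proof -
  have "(\<Sum>k<m. pcost n Ep Em \<alpha> \<beta> \<gamma> (s(i:=k)) i) = (\<Sum>k<m. \<Sum>j<n. \<alpha> * ind ((s(i:=k)) j = k) + \<beta> * ind ((s(i:=k)) j = k \<and> {i,j} \<in> Em) + \<gamma> * ind ((s(i:=k)) j \<noteq> k \<and> {i,j} \<in> Ep))"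
    by (simp only: pcost_sum fun_upd_same)
  also have "\<dots> = (\<Sum>j<n. \<Sum>k<m. \<alpha> * ind ((s(i:=k)) j = k) + \<beta> * ind ((s(i:=k)) j = k \<and> {i,j} \<in> Em) + \<gamma> * ind ((s(i:=k)) j \<noteq> k \<and> {i,j} \<in> Ep))"
    by (rule sum.swap)
  also have "\<dots> = Tpl n m Ep Em \<alpha> \<beta> \<gamma> i"
    unfolding Tpl_def
  proof (rule sum.cong[OF refl])
    fix j assume j: "j \<in> {..<n}"
    show "(\<Sum>k<m. \<alpha> * ind ((s(i:=k)) j = k) + \<beta> * ind ((s(i:=k)) j = k \<and> {i,j} \<in> Em) + \<gamma> * ind ((s(i:=k)) j \<noteq> k \<and> {i,j} \<in> Ep))
      = (if j = i then real m * \<alpha> else \<alpha> + \<beta> * ind ({i,j}\<in>Em) + \<gamma> * (real m - 1) * ind ({i,j}\<in>Ep))"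
    proof (cases "j = i")
      case True
      then show ?thesis using ns by (simp add: ind_def)
    next
      case False
      have lt: "s j < m" using states_lt[OF s] j by auto
      have "(\<Sum>k<m. \<alpha> * ind ((s(i:=k)) j = k) + \<beta> * ind ((s(i:=k)) j = k \<and> {i,j} \<in> Em) + \<gamma> * ind ((s(i:=k)) j \<noteq> k \<and> {i,j} \<in> Ep))
        = (\<Sum>k<m. \<alpha> * ind (s j = k) + \<beta> * ind({i,j} \<in> Em) * ind (s j = k) + \<gamma> * ind({i,j} \<in> Ep) * ind (s j \<noteq> k))"
        using False by (intro sum.cong refl) (simp add: ind_conj)
      also have "\<dots> = \<alpha> * (\<Sum>k<m. ind (s j = k)) + \<beta> * ind({i,j} \<in> Em) * (\<Sum>k<m. ind (s j = k)) + \<gamma> * ind({i,j} \<in> Ep) * (\<Sum>k<m. ind (s j \<noteq> k))"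
        by (simp add: sum.distrib sum_distrib_left)
      also have "\<dots> = \<alpha> + \<beta> * ind ({i,j}\<in>Em) + \<gamma> * (real m - 1) * ind ({i,j}\<in>Ep)"
        using lt by (simp add: sum_ind_eq sum_ind_neq mult_ac)
      finally show ?thesis using False by simp
    qed
  qed
  finally show ?thesis .
qed


lemma Lam_ge1:
  fixes n m :: nat and \<alpha> \<beta> \<gamma> :: real
  assumes "n \<ge> 1" "m \<ge> 1" "\<alpha> > 0" "\<beta> \<ge> 0" "\<gamma> \<ge> 0" "\<gamma> \<le> \<alpha>"
  shows "Lam n m \<alpha> \<beta> \<gamma> \<ge> 1"
proof -
  define G where "G = \<gamma>/\<alpha>"
  define x where "x = (real m - 1) / real n"
  have G1: "G \<le> 1" "G \<ge> 0" using assms unfolding G_def by auto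
  have x0: "x \<ge> 0" using assms unfolding x_def by auto
  have "G * x \<le> x" using G1 x0 by (simp add: mult_left_le_one_le)
  moreover have "\<beta> / \<alpha> * ((real m - 1) / real m) \<ge> 0" "G * ((real m - 1) / real m) \<ge> 0"
    using assms unfolding G_def by (auto intro!: mult_nonneg_nonneg divide_nonneg_nonneg)
  moreover have "Lam n m \<alpha> \<beta> \<gamma> = 1 + x + \<beta> / \<alpha> * ((real m - 1) / real m) + G * ((real m - 1) / real m) - G * x"
    unfolding Lam_def G_def x_def by (simp add: right_diff_distrib)
  ultimately show ?thesis by linarith
qed

lemma arith_i:
  fixes n m :: nat and \<alpha> \<beta> \<gamma> S C F Ts :: real
  assumes n: "n \<ge> 1" and m: "m \<ge> 1" and a: "\<alpha> > 0" and b: "\<beta> \<ge> 0" and g: "\<gamma> \<ge> 0" and ga: "\<gamma> \<le> \<alpha>"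
    and S: "real n ^ 2 \<le> real m * S" and C: "C \<ge> 0" and F: "F \<ge> 0"
    and Ts: "Ts \<le> \<alpha>*(real m-1)*real n + \<alpha>*real n^2 + \<beta>*(C + real n^2 - S) + \<gamma>*(real m-1)*(F+S) - \<gamma>*(real m-1)*real n"
  shows "Ts / real m \<le> Lam n m \<alpha> \<beta> \<gamma> * (\<alpha>*S + \<beta>*C + \<gamma>*F)"
proof -
  define L where "L = Lam n m \<alpha> \<beta> \<gamma>"
  define U where "U = \<alpha>*(real m-1)*real n + \<alpha>*real n^2 + \<beta>*(C + real n^2 - S) + \<gamma>*(real m-1)*(F+S) - \<gamma>*(real m-1)*real n"
  have mp: "real m > 0" "real n > 0" using n m by auto
  have eq: "L*(\<alpha>*S + \<beta>*C + \<gamma>*F) - U/real m = (S - real n^2/real m)*(\<alpha>+\<beta>+(\<alpha>-\<gamma>)*(real m-1)/real n)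
      + \<beta>*C*(L - 1/real m) + \<gamma>*F*(L - (real m-1)/real m)"
    unfolding L_def U_def Lam_def using mp a by (simp add: field_simps power2_eq_square)
  have L1: "L \<ge> 1" unfolding L_def using Lam_ge1 n m a b g ga by blast
  have t1: "S - real n^2/real m \<ge> 0" using S mp by (simp add: field_simps)
  have "(\<alpha>-\<gamma>)*(real m-1)/real n \<ge> 0" using a b ga m mp by (intro divide_nonneg_nonneg mult_nonneg_nonneg) auto
  then have t2: "\<alpha>+\<beta>+(\<alpha>-\<gamma>)*(real m-1)/real n \<ge> 0" using a b by linarith
  have "1/real m \<le> 1" "(real m-1)/real m \<le> 1" using m by auto
  then have t3: "L - 1/real m \<ge> 0" and t4: "L - (real m-1)/real m \<ge> 0" using L1 by linarith+
  have "0 \<le> (S - real n^2/real m)*(\<alpha>+\<beta>+(\<alpha>-\<gamma>)*(real m-1)/real n)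
      + \<beta>*C*(L - 1/real m) + \<gamma>*F*(L - (real m-1)/real m)"
    using mult_nonneg_nonneg[OF t1 t2] mult_nonneg_nonneg[OF mult_nonneg_nonneg[OF b C] t3]
      mult_nonneg_nonneg[OF mult_nonneg_nonneg[OF g F] t4] by linarith
  then have "U / real m \<le> L*(\<alpha>*S + \<beta>*C + \<gamma>*F)" using eq by linarith
  moreover have "Ts / real m \<le> U / real m" using Ts mp unfolding U_def by (simp add: divide_right_mono)
  ultimately show ?thesis unfolding L_def by linarith
qed

lemma arith_iii:
  fixes n m :: nat and \<alpha> \<beta> \<gamma> S C F Ts :: real
  assumes n: "n \<ge> 1" and m: "m \<ge> 1" and a: "\<alpha> > 0" and b: "\<beta> \<ge> 0" and g: "\<gamma> \<ge> 0" and ga: "\<alpha> < \<gamma>"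
    and S: "real n ^ 2 \<le> real m * S" and C: "C \<ge> 0" and F: "F \<ge> 0"
    and Ts: "Ts \<le> \<alpha>*(real m-1)*real n + \<alpha>*real n^2 + \<beta>*(C + real n^2 - S) + \<gamma>*(real m-1)*(F+S) - \<gamma>*(real m-1)*real n"
  shows "Ts / real m \<le> (1 + \<beta> / \<alpha> * ((real m - 1) / real m) + \<gamma> / \<alpha> * ((real m - 1) / real m)) * (\<alpha>*S + \<beta>*C + \<gamma>*F)"
proof -
  define L where "L = (1 + \<beta> / \<alpha> * ((real m - 1) / real m) + \<gamma> / \<alpha> * ((real m - 1) / real m))"
  define U where "U = \<alpha>*(real m-1)*real n + \<alpha>*real n^2 + \<beta>*(C + real n^2 - S) + \<gamma>*(real m-1)*(F+S) - \<gamma>*(real m-1)*real n"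
  have mp: "real m > 0" "real n > 0" using n m by auto
  have eq: "L*(\<alpha>*S + \<beta>*C + \<gamma>*F) - U/real m = (S - real n^2/real m)*(\<alpha>+\<beta>) + (\<gamma>-\<alpha>)*(real m-1)*real n/real m
      + \<beta>*C*(L - 1/real m) + \<gamma>*F*(L - (real m-1)/real m)"
    unfolding L_def U_def using mp a by (simp add: field_simps power2_eq_square)
  have L1: "L \<ge> 1" unfolding L_def using a b g m by (auto intro!: mult_nonneg_nonneg divide_nonneg_nonneg)
  have t1: "S - real n^2/real m \<ge> 0" using S mp by (simp add: field_simps)
  have t2: "(\<gamma>-\<alpha>)*(real m-1)*real n/real m \<ge> 0" using ga m mp by (auto intro!: mult_nonneg_nonneg divide_nonneg_nonneg)
  have "1/real m \<le> 1" "(real m-1)/real m \<le> 1" using m by auto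
  then have t3: "L - 1/real m \<ge> 0" and t4: "L - (real m-1)/real m \<ge> 0" using L1 by linarith+
  have "0 \<le> (S - real n^2/real m)*(\<alpha>+\<beta>) + (\<gamma>-\<alpha>)*(real m-1)*real n/real m
      + \<beta>*C*(L - 1/real m) + \<gamma>*F*(L - (real m-1)/real m)"
    using t1 t2 t3 t4 a b C g F by (intro add_nonneg_nonneg mult_nonneg_nonneg) auto
  then have "U / real m \<le> L*(\<alpha>*S + \<beta>*C + \<gamma>*F)" using eq by linarith
  moreover have "Ts / real m \<le> U / real m" using Ts mp unfolding U_def by (simp add: divide_right_mono)
  ultimately show ?thesis unfolding L_def by linarith
qed




definition Sx :: "nat \<Rightarrow> (nat \<Rightarrow> nat) \<Rightarrow> real" where
  "Sx n t = (\<Sum>i<n. \<Sum>j<n. ind (t j = t i))"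
definition Cx :: "nat \<Rightarrow> nat set set \<Rightarrow> (nat \<Rightarrow> nat) \<Rightarrow> real" where
  "Cx n Em t = (\<Sum>i<n. \<Sum>j<n. ind (t j = t i \<and> {i,j} \<in> Em))"
definition Fx :: "nat \<Rightarrow> nat set set \<Rightarrow> (nat \<Rightarrow> nat) \<Rightarrow> real" where
  "Fx n Ep t = (\<Sum>i<n. \<Sum>j<n. ind (t j \<noteq> t i \<and> {i,j} \<in> Ep))"

lemma ind_nonneg: "ind P \<ge> 0" by (simp add: ind_def)

lemma social_decomp: "social_cost n Ep Em \<alpha> \<beta> \<gamma> t = \<alpha> * Sx n t + \<beta> * Cx n Em t + \<gamma> * Fx n Ep t"
  unfolding social_cost_def Sx_def Cx_def Fx_def
  by (simp add: pcost_sum sum.distrib sum_distrib_left)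

lemma CF_nonneg: "Cx n Em t \<ge> 0" "Fx n Ep t \<ge> 0"
  unfolding Cx_def Fx_def by (auto intro!: sum_nonneg simp: ind_nonneg)

lemma S_bound:
  assumes t: "t \<in> states n m" and m: "m \<ge> 1"
  shows "real n ^ 2 \<le> real m * Sx n t"
proof -
  define x where "x k = (\<Sum>i<n. ind (t i = k))" for k
  have lt: "\<And>i. i < n \<Longrightarrow> t i < m" using states_lt[OF t] by auto
  have "Sx n t = (\<Sum>i<n. \<Sum>j<n. \<Sum>k<m. ind (t i = k) * ind (t j = k))"
    unfolding Sx_def
  proof (intro sum.cong refl)
    fix i j assume "i \<in> {..<n}" "j \<in> {..<n}"
    then have "t i < m" using lt by auto
    have "(\<Sum>k<m. ind (t i = k) * ind (t j = k)) = (\<Sum>k<m. if t i = k then ind (t j = t i) else 0)"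
      by (intro sum.cong refl) (auto simp: ind_def)
    then show "ind (t j = t i) = (\<Sum>k<m. ind (t i = k) * ind (t j = k))"
      using \<open>t i < m\<close> by simp
  qed
  also have "\<dots> = (\<Sum>i<n. \<Sum>k<m. \<Sum>j<n. ind (t i = k) * ind (t j = k))"
    by (rule sum.cong[OF refl], rule sum.swap)
  also have "\<dots> = (\<Sum>k<m. \<Sum>i<n. \<Sum>j<n. ind (t i = k) * ind (t j = k))"
    by (rule sum.swap)
  also have "\<dots> = (\<Sum>k<m. x k ^ 2)"
    unfolding x_def power2_eq_square by (simp add: sum_product)
  finally have Sx: "Sx n t = (\<Sum>k<m. x k ^ 2)" .
  have sx: "(\<Sum>k<m. x k) = real n"
  proof -
    have "(\<Sum>k<m. x k) = (\<Sum>i<n. \<Sum>k<m. ind (t i = k))" unfolding x_def by (rule sum.swap)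
    also have "\<dots> = (\<Sum>i<n. 1)" using lt by (intro sum.cong refl) (simp add: sum_ind_eq)
    finally show ?thesis by simp
  qed
  have mp: "real m > 0" using m by auto
  have "0 \<le> (\<Sum>k<m. (x k - real n / real m) ^ 2)" by (auto intro: sum_nonneg)
  also have "\<dots> = (\<Sum>k<m. x k ^ 2) - 2 * (real n / real m) * (\<Sum>k<m. x k) + real m * (real n / real m)^2"
    by (simp add: power2_diff sum.distrib sum_subtractf sum_distrib_left sum_divide_distrib mult_ac)
  also have "\<dots> = Sx n t - real n ^ 2 / real m"
    using mp by (simp add: Sx sx field_simps power2_eq_square)
  finally show ?thesis using mp by (simp add: field_simps)
qed



lemma T_bound:
  assumes v: "valid_instance n m Ep Em \<alpha> \<beta> \<gamma>" and t: "t \<in> states n m"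
  shows "(\<Sum>i<n. Tpl n m Ep Em \<alpha> \<beta> \<gamma> i) \<le> \<alpha>*(real m-1)*real n + \<alpha>*real n^2
     + \<beta>*(Cx n Em t + real n^2 - Sx n t) + \<gamma>*(real m-1)*(Fx n Ep t + Sx n t) - \<gamma>*(real m-1)*real n"
proof -
  have b: "\<beta> \<ge> 0" and g: "\<gamma> \<ge> 0" and m: "m \<ge> 1" using v unfolding valid_instance_def by auto
  have gm: "\<gamma>*(real m - 1) \<ge> 0" using g m by auto
  define R where "R i j = \<alpha>*(real m-1)*ind(j=i) + \<alpha> + \<beta>*ind(t j = t i \<and> {i,j} \<in> Em) + \<beta> - \<beta>*ind(t j = t i)
     + \<gamma>*(real m-1)*ind(t j \<noteq> t i \<and> {i,j} \<in> Ep) + \<gamma>*(real m-1)*ind(t j = t i) - \<gamma>*(real m-1)*ind(j=i)" for i j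
  have pw: "(if j = i then real m * \<alpha> else \<alpha> + \<beta> * ind ({i,j}\<in>Em) + \<gamma> * (real m - 1) * ind ({i,j}\<in>Ep)) \<le> R i j"
    for i j
  proof (cases "j = i")
    case True
    then show ?thesis using noself[OF v, of i] by (simp add: R_def ind_def algebra_simps)
  next
    case False
    then show ?thesis using b gm unfolding R_def ind_def by (auto simp: algebra_simps)
  qed
  have "(\<Sum>i<n. Tpl n m Ep Em \<alpha> \<beta> \<gamma> i) \<le> (\<Sum>i<n. \<Sum>j<n. R i j)"
    unfolding Tpl_def by (intro sum_mono pw)
  also have "\<dots> = \<alpha>*(real m-1)*(\<Sum>i<n. \<Sum>j<n. ind(j=i)) + \<alpha>*real n^2
     + \<beta>*(Cx n Em t + real n^2 - Sx n t) + \<gamma>*(real m-1)*(Fx n Ep t + Sx n t) - \<gamma>*(real m-1)*(\<Sum>i<n. \<Sum>j<n. ind(j=i))"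
    unfolding R_def Cx_def Fx_def Sx_def
    by (simp add: sum.distrib sum_subtractf sum_distrib_left algebra_simps power2_eq_square)
  also have "(\<Sum>i<n. \<Sum>j<n. ind(j=i)) = real n"
    by (simp add: ind_def)
  finally show ?thesis .
qed


lemma states_finite: "finite (states n m)"
  unfolding states_def by (rule finite_PiE) auto

lemma states_nonempty: "m \<ge> 1 \<Longrightarrow> states n m \<noteq> {}"
  unfolding states_def by (auto simp: PiE_eq_empty_iff lessThan_empty_iff)

lemma opt_props:
  assumes "m \<ge> 1"
  shows "\<exists>t\<in>states n m. opt_cost n m Ep Em \<alpha> \<beta> \<gamma> = social_cost n Ep Em \<alpha> \<beta> \<gamma> t"
    and "\<And>t. t \<in> states n m \<Longrightarrow> opt_cost n m Ep Em \<alpha> \<beta> \<gamma> \<le> social_cost n Ep Em \<alpha> \<beta> \<gamma> t"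
proof -
  have fin: "finite (social_cost n Ep Em \<alpha> \<beta> \<gamma> ` states n m)" using states_finite by simp
  have ne: "social_cost n Ep Em \<alpha> \<beta> \<gamma> ` states n m \<noteq> {}" using states_nonempty[OF assms] by simp
  show "\<exists>t\<in>states n m. opt_cost n m Ep Em \<alpha> \<beta> \<gamma> = social_cost n Ep Em \<alpha> \<beta> \<gamma> t"
    using Min_in[OF fin ne] unfolding opt_cost_def by auto
  show "\<And>t. t \<in> states n m \<Longrightarrow> opt_cost n m Ep Em \<alpha> \<beta> \<gamma> \<le> social_cost n Ep Em \<alpha> \<beta> \<gamma> t"
    unfolding opt_cost_def using fin by (auto intro: Min_le)
qed

lemma lhs_eq:
  assumes v: "valid_instance n m Ep Em \<alpha> \<beta> \<gamma>" and s: "s \<in> states n m"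
  shows "(\<Sum>i<n. \<Sum>k<m. 1 / real m * pcost n Ep Em \<alpha> \<beta> \<gamma> (s(i:=k)) i) = (\<Sum>i<n. Tpl n m Ep Em \<alpha> \<beta> \<gamma> i) / real m"
proof -
  have "(\<Sum>i<n. \<Sum>k<m. 1 / real m * pcost n Ep Em \<alpha> \<beta> \<gamma> (s(i:=k)) i)
      = (\<Sum>i<n. 1 / real m * (\<Sum>k<m. pcost n Ep Em \<alpha> \<beta> \<gamma> (s(i:=k)) i))"
    by (simp add: sum_distrib_left)
  also have "\<dots> = (\<Sum>i<n. 1 / real m * Tpl n m Ep Em \<alpha> \<beta> \<gamma> i)"
    using dev_sum[OF s _ conjunct1[OF noself[OF v]]] by (intro sum.cong refl) auto
  finally show ?thesis by (simp add: sum_divide_distrib)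
qed

lemma smooth_generic:
  assumes v: "valid_instance n m Ep Em \<alpha> \<beta> \<gamma>"
    and H: "\<And>t. t \<in> states n m \<Longrightarrow> (\<Sum>i<n. Tpl n m Ep Em \<alpha> \<beta> \<gamma> i) / real m \<le> L * social_cost n Ep Em \<alpha> \<beta> \<gamma> t"
  shows "semi_smooth n m Ep Em \<alpha> \<beta> \<gamma> L 0 \<and> PoTA_le n m Ep Em \<alpha> \<beta> \<gamma> L"
proof -
  have m: "m \<ge> 1" using v unfolding valid_instance_def by auto
  obtain t where t: "t \<in> states n m" and opt: "opt_cost n m Ep Em \<alpha> \<beta> \<gamma> = social_cost n Ep Em \<alpha> \<beta> \<gamma> t"
    using opt_props(1)[OF m] by blast
  define Ts where "Ts = (\<Sum>i<n. Tpl n m Ep Em \<alpha> \<beta> \<gamma> i) / real m"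
  have key: "Ts \<le> L * opt_cost n m Ep Em \<alpha> \<beta> \<gamma>" using H[OF t] opt unfolding Ts_def by simp
  have md: "machine_dist m (\<lambda>k. 1 / real m)" unfolding machine_dist_def using m by auto
  have ss: "semi_smooth n m Ep Em \<alpha> \<beta> \<gamma> L 0"
    unfolding semi_smooth_def
  proof (intro exI[of _ "\<lambda>i k. 1 / real m"] conjI allI impI ballI)
    show "machine_dist m (\<lambda>k. 1 / real m)" if "i < n" for i using md .
    fix s assume s: "s \<in> states n m"
    show "(\<Sum>i<n. \<Sum>k<m. 1 / real m * pcost n Ep Em \<alpha> \<beta> \<gamma> (s(i := k)) i)
         \<le> L * opt_cost n m Ep Em \<alpha> \<beta> \<gamma> + 0 * social_cost n Ep Em \<alpha> \<beta> \<gamma> s"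
      using lhs_eq[OF v s] key unfolding Ts_def by simp
  qed
  have pota: "PoTA_le n m Ep Em \<alpha> \<beta> \<gamma> L"
    unfolding PoTA_le_def
  proof (intro allI impI)
    fix w assume w: "is_CCE n m Ep Em \<alpha> \<beta> \<gamma> w"
    have w0: "\<And>s. s \<in> states n m \<Longrightarrow> w s \<ge> 0" and w1: "(\<Sum>s\<in>states n m. w s) = 1"
      using w unfolding is_CCE_def state_dist_def by auto
    define E where "E i = expected n m w (\<lambda>s. pcost n Ep Em \<alpha> \<beta> \<gamma> s i)" for i
    define Ek where "Ek i k = expected n m w (\<lambda>s. pcost n Ep Em \<alpha> \<beta> \<gamma> (s(i:=k)) i)" for i k
    have ce: "\<And>i k. i < n \<Longrightarrow> k < m \<Longrightarrow> E i \<le> Ek i k"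
      using w unfolding is_CCE_def E_def Ek_def by auto
    have "expected n m w (social_cost n Ep Em \<alpha> \<beta> \<gamma>) = (\<Sum>i<n. E i)"
      unfolding expected_def E_def social_cost_def by (simp add: sum_distrib_left sum.swap[of _ "states n m"])
    also have "\<dots> = (\<Sum>i<n. \<Sum>k<m. 1 / real m * E i)"
      using m by simp
    also have "\<dots> \<le> (\<Sum>i<n. \<Sum>k<m. 1 / real m * Ek i k)"
      using ce m by (intro sum_mono mult_left_mono) auto
    also have "\<dots> = (\<Sum>s\<in>states n m. w s * (\<Sum>i<n. \<Sum>k<m. 1 / real m * pcost n Ep Em \<alpha> \<beta> \<gamma> (s(i:=k)) i))"
      unfolding Ek_def expected_def
      by (simp add: sum_distrib_left sum.swap[of _ "states n m"] mult_ac)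
    also have "\<dots> = (\<Sum>s\<in>states n m. w s * Ts)"
      using lhs_eq[OF v] unfolding Ts_def by (intro sum.cong refl) auto
    also have "\<dots> = Ts" using w1 by (simp add: sum_distrib_right[symmetric])
    also have "\<dots> \<le> L * opt_cost n m Ep Em \<alpha> \<beta> \<gamma>" by (rule key)
    finally show "expected n m w (social_cost n Ep Em \<alpha> \<beta> \<gamma>) \<le> L * opt_cost n m Ep Em \<alpha> \<beta> \<gamma>" .
  qed
  show ?thesis using ss pota by blast
qed

lemma part_i:
  assumes v: "valid_instance n m Ep Em \<alpha> \<beta> \<gamma>" and ga: "\<alpha> \<ge> \<gamma>"
  shows "semi_smooth n m Ep Em \<alpha> \<beta> \<gamma> (Lam n m \<alpha> \<beta> \<gamma>) 0 \<and> PoTA_le n m Ep Em \<alpha> \<beta> \<gamma> (Lam n m \<alpha> \<beta> \<gamma>)"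
proof (rule smooth_generic[OF v])
  fix t assume t: "t \<in> states n m"
  have p: "n \<ge> 1" "m \<ge> 1" "\<alpha> > 0" "\<beta> \<ge> 0" "\<gamma> \<ge> 0" using v unfolding valid_instance_def by auto
  show "(\<Sum>i<n. Tpl n m Ep Em \<alpha> \<beta> \<gamma> i) / real m \<le> Lam n m \<alpha> \<beta> \<gamma> * social_cost n Ep Em \<alpha> \<beta> \<gamma> t"
    unfolding social_decomp
    by (rule arith_i[OF p ga S_bound[OF t p(2)] CF_nonneg T_bound[OF v t]])
qed

lemma part_iii:
  assumes v: "valid_instance n m Ep Em \<alpha> \<beta> \<gamma>" and ga: "\<alpha> < \<gamma>"
  shows "semi_smooth n m Ep Em \<alpha> \<beta> \<gamma>
        (1 + \<beta> / \<alpha> * ((real m - 1) / real m) + \<gamma> / \<alpha> * ((real m - 1) / real m)) 0"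
proof -
  have p: "n \<ge> 1" "m \<ge> 1" "\<alpha> > 0" "\<beta> \<ge> 0" "\<gamma> \<ge> 0" using v unfolding valid_instance_def by auto
  have "semi_smooth n m Ep Em \<alpha> \<beta> \<gamma> (1 + \<beta> / \<alpha> * ((real m - 1) / real m) + \<gamma> / \<alpha> * ((real m - 1) / real m)) 0 \<and> PoTA_le n m Ep Em \<alpha> \<beta> \<gamma> (1 + \<beta> / \<alpha> * ((real m - 1) / real m) + \<gamma> / \<alpha> * ((real m - 1) / real m))"
  proof (rule smooth_generic[OF v])
    fix t assume t: "t \<in> states n m"
    show "(\<Sum>i<n. Tpl n m Ep Em \<alpha> \<beta> \<gamma> i) / real m \<le> (1 + \<beta> / \<alpha> * ((real m - 1) / real m) + \<gamma> / \<alpha> * ((real m - 1) / real m)) * social_cost n Ep Em \<alpha> \<beta> \<gamma> t"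
      unfolding social_decomp
      by (rule arith_iii[OF p ga S_bound[OF t p(2)] CF_nonneg T_bound[OF v t]])
  qed
  then show ?thesis by blast
qed


lemma upd_states: "s \<in> states n m \<Longrightarrow> i < n \<Longrightarrow> k < m \<Longrightarrow> s(i:=k) \<in> states n m"
  unfolding states_def by (auto simp: PiE_def Pi_def extensional_def)

lemma upd_states_eq: "s \<in> states n m \<Longrightarrow> i < n \<Longrightarrow> s(i := s i) = s"
  by simp

lemma involution_sum:
  fixes h :: "(nat \<Rightarrow> nat) \<Rightarrow> real"
  assumes i: "i < n"
  shows "(\<Sum>s\<in>states n m. \<Sum>k<m. h (s(i:=k))) = real m * (\<Sum>s\<in>states n m. h s)"
proof -
  have "(\<Sum>s\<in>states n m. \<Sum>k<m. h (s(i:=k))) = (\<Sum>(s,k)\<in>states n m \<times> {..<m}. h (s(i:=k)))"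
    by (rule sum.cartesian_product)
  also have "\<dots> = (\<Sum>(s,k)\<in>states n m \<times> {..<m}. h s)"
  proof (rule sum.reindex_bij_witness[where i = "\<lambda>(s,k). (s(i:=k), s i)" and j = "\<lambda>(s,k). (s(i:=k), s i)"])
    fix a assume a: "a \<in> states n m \<times> {..<m}"
    then obtain s k where [simp]: "a = (s,k)" and s: "s \<in> states n m" and k: "k < m" by auto
    have si: "s i < m" using states_lt[OF s i] .
    show "(case case a of (s, k) \<Rightarrow> (s(i := k), s i) of (s, k) \<Rightarrow> (s(i := k), s i)) = a" by simp
    show "(case a of (s, k) \<Rightarrow> (s(i := k), s i)) \<in> states n m \<times> {..<m}"
      using upd_states[OF s i k] si by simp
    show "(case case a of (s, k) \<Rightarrow> (s(i := k), s i) of (s, k) \<Rightarrow> (s(i := k), s i)) = a" by simp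
    show "(case a of (s, k) \<Rightarrow> (s(i := k), s i)) \<in> states n m \<times> {..<m}"
      using upd_states[OF s i k] si by simp
    show "(case case a of (s, k) \<Rightarrow> (s(i := k), s i) of (s, k) \<Rightarrow> h s) = (case a of (s, k) \<Rightarrow> h (s(i := k)))"
      by simp
  qed
  also have "\<dots> = (\<Sum>s\<in>states n m. \<Sum>k<m. h s)"
    by (rule sum.cartesian_product[symmetric])
  also have "\<dots> = real m * (\<Sum>s\<in>states n m. h s)" by (simp add: sum_distrib_left)
  finally show ?thesis .
qed

definition sw :: "nat \<Rightarrow> nat \<Rightarrow> nat \<Rightarrow> nat" where
  "sw a b x = (if x = a then b else if x = b then a else x)"

lemma sw_inj: "sw a b x = sw a b y \<longleftrightarrow> x = y"
  unfolding sw_def by auto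

lemma sw_sw: "sw a b (sw a b x) = x"
  unfolding sw_def by auto

definition Pm :: "nat \<Rightarrow> nat \<Rightarrow> nat \<Rightarrow> (nat \<Rightarrow> nat) \<Rightarrow> (nat \<Rightarrow> nat)" where
  "Pm n a b s = restrict (sw a b \<circ> s) {..<n}"

lemma Pm_states: "a < m \<Longrightarrow> b < m \<Longrightarrow> s \<in> states n m \<Longrightarrow> Pm n a b s \<in> states n m"
  unfolding states_def Pm_def by (auto simp: PiE_def Pi_def sw_def)

lemma Pm_Pm: "s \<in> states n m \<Longrightarrow> Pm n a b (Pm n a b s) = s"
  unfolding states_def Pm_def by (auto simp: PiE_def extensional_def sw_sw fun_eq_iff)

lemma pcost_Pm: "i < n \<Longrightarrow> pcost n Ep Em \<alpha> \<beta> \<gamma> (Pm n a b s) i = pcost n Ep Em \<alpha> \<beta> \<gamma> s i"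
  unfolding pcost_sum Pm_def by (intro sum.cong refl) (simp add: sw_inj)

lemma Pm_upd: "i < n \<Longrightarrow> Pm n a b (s(i:=b)) = (Pm n a b s)(i:=a)"
  unfolding Pm_def by (auto simp: fun_eq_iff sw_def)

lemma sym_sum:
  assumes i: "i < n" and a: "a < m" and b: "b < m"
  shows "(\<Sum>s\<in>states n m. pcost n Ep Em \<alpha> \<beta> \<gamma> (s(i:=a)) i) = (\<Sum>s\<in>states n m. pcost n Ep Em \<alpha> \<beta> \<gamma> (s(i:=b)) i)"
proof -
  have "(\<Sum>s\<in>states n m. pcost n Ep Em \<alpha> \<beta> \<gamma> (s(i:=b)) i) = (\<Sum>s\<in>states n m. pcost n Ep Em \<alpha> \<beta> \<gamma> ((Pm n a b s)(i:=a)) i)"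
    using i by (intro sum.cong refl) (simp add: Pm_upd[symmetric] pcost_Pm)
  also have "\<dots> = (\<Sum>s\<in>states n m. pcost n Ep Em \<alpha> \<beta> \<gamma> (s(i:=a)) i)"
    by (rule sum.reindex_bij_witness[where i = "Pm n a b" and j = "Pm n a b"])
       (auto simp: Pm_Pm Pm_states a b)
  finally show ?thesis by simp
qed


lemma card_states: "card (states n m) = m ^ n"
  unfolding states_def by (simp add: card_PiE)

lemma uniform_props:
  assumes v: "valid_instance n m Ep Em \<alpha> \<beta> \<gamma>"
  shows "is_mixed_NE n m Ep Em \<alpha> \<beta> \<gamma> (\<lambda>i k. 1 / real m)"
    and "expected n m (product_dist n (\<lambda>i k. 1 / real m)) (social_cost n Ep Em \<alpha> \<beta> \<gamma>)
          = (\<Sum>i<n. Tpl n m Ep Em \<alpha> \<beta> \<gamma> i) / real m"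
proof -
  have m: "m \<ge> 1" using v unfolding valid_instance_def by auto
  have mp: "real m > 0" using m by auto
  have pd: "product_dist n (\<lambda>i k. 1 / real m) s = (1 / real m) ^ n" for s
    unfolding product_dist_def by simp
  have ex: "expected n m (product_dist n (\<lambda>i k. 1 / real m)) f = (1 / real m) ^ n * (\<Sum>s\<in>states n m. f s)" for f
    unfolding expected_def pd by (simp add: sum_distrib_left)
  have cs: "(\<Sum>s\<in>states n m. pcost n Ep Em \<alpha> \<beta> \<gamma> s i) = real m ^ n * Tpl n m Ep Em \<alpha> \<beta> \<gamma> i / real m"
    if i: "i < n" for i
  proof -
    have "real m * (\<Sum>s\<in>states n m. pcost n Ep Em \<alpha> \<beta> \<gamma> s i)
        = (\<Sum>s\<in>states n m. \<Sum>k<m. pcost n Ep Em \<alpha> \<beta> \<gamma> (s(i:=k)) i)"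
      by (rule involution_sum[OF i, symmetric])
    also have "\<dots> = (\<Sum>s\<in>states n m. Tpl n m Ep Em \<alpha> \<beta> \<gamma> i)"
      using dev_sum[OF _ i conjunct1[OF noself[OF v]]] by (intro sum.cong refl) auto
    also have "\<dots> = real m ^ n * Tpl n m Ep Em \<alpha> \<beta> \<gamma> i" by (simp add: card_states)
    finally show ?thesis using mp by (simp add: field_simps)
  qed
  have dk: "(\<Sum>s\<in>states n m. pcost n Ep Em \<alpha> \<beta> \<gamma> (s(i:=k)) i) = (\<Sum>s\<in>states n m. pcost n Ep Em \<alpha> \<beta> \<gamma> s i)"
    if i: "i < n" and k: "k < m" for i k
  proof -
    define D where "D k = (\<Sum>s\<in>states n m. pcost n Ep Em \<alpha> \<beta> \<gamma> (s(i:=k)) i)" for k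
    have "(\<Sum>k'<m. D k') = (\<Sum>k'<m. D k)"
      unfolding D_def by (rule sum.cong[OF refl], rule sym_sum[OF i _ k], simp)
    moreover have "(\<Sum>k'<m. D k') = real m * (\<Sum>s\<in>states n m. pcost n Ep Em \<alpha> \<beta> \<gamma> s i)"
      unfolding D_def by (subst sum.swap) (rule involution_sum[OF i])
    moreover have "(\<Sum>k'<m. D k) = real m * D k" by simp
    ultimately have "real m * D k = real m * (\<Sum>s\<in>states n m. pcost n Ep Em \<alpha> \<beta> \<gamma> s i)" by linarith
    then have "D k = (\<Sum>s\<in>states n m. pcost n Ep Em \<alpha> \<beta> \<gamma> s i)" using mp by simp
    then show ?thesis unfolding D_def .
  qed
  have sd: "state_dist n m (product_dist n (\<lambda>i k. 1 / real m))"
    unfolding state_dist_def pd using mp by (simp add: card_states power_divide)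
  show "is_mixed_NE n m Ep Em \<alpha> \<beta> \<gamma> (\<lambda>i k. 1 / real m)"
    unfolding is_mixed_NE_def is_CCE_def machine_dist_def
    using sd m by (auto simp: ex dk)
  show "expected n m (product_dist n (\<lambda>i k. 1 / real m)) (social_cost n Ep Em \<alpha> \<beta> \<gamma>)
          = (\<Sum>i<n. Tpl n m Ep Em \<alpha> \<beta> \<gamma> i) / real m"
  proof -
    have "(\<Sum>s\<in>states n m. social_cost n Ep Em \<alpha> \<beta> \<gamma> s) = (\<Sum>i<n. \<Sum>s\<in>states n m. pcost n Ep Em \<alpha> \<beta> \<gamma> s i)"
      unfolding social_cost_def by (rule sum.swap)
    also have "\<dots> = (\<Sum>i<n. real m ^ n * Tpl n m Ep Em \<alpha> \<beta> \<gamma> i / real m)"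
      using cs by (intro sum.cong refl) auto
    finally have "(\<Sum>s\<in>states n m. social_cost n Ep Em \<alpha> \<beta> \<gamma> s) = real m ^ n * (\<Sum>i<n. Tpl n m Ep Em \<alpha> \<beta> \<gamma> i) / real m"
      by (simp add: sum_distrib_left sum_divide_distrib)
    then show ?thesis unfolding ex using mp by (simp add: power_divide)
  qed
qed


lemma tight_Em_iff: "i < m^2 \<Longrightarrow> j < m^2 \<Longrightarrow> {i,j} \<in> tight_Em m \<longleftrightarrow> i div m \<noteq> j div m"
  unfolding tight_Em_def by (auto simp: doubleton_eq_iff)

lemma tight_Ep_iff: "i < m^2 \<Longrightarrow> j < m^2 \<Longrightarrow> {i,j} \<in> tight_Ep m \<longleftrightarrow> i \<noteq> j \<and> i div m = j div m"
  unfolding tight_Ep_def by (auto simp: doubleton_eq_iff)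

lemma tight_valid:
  assumes "1 \<le> m" "\<alpha> > 0" "\<beta> \<ge> 0" "\<gamma> \<ge> 0"
  shows "valid_instance (m^2) m (tight_Ep m) (tight_Em m) \<alpha> \<beta> \<gamma>"
proof -
  have "1 \<le> m^2" using assms by simp
  moreover have "tight_Ep m \<subseteq> {{i, j} | i j. i < m^2 \<and> j < m^2 \<and> i \<noteq> j}"
    unfolding tight_Ep_def by auto
  moreover have "tight_Em m \<subseteq> {{i, j} | i j. i < m^2 \<and> j < m^2 \<and> i \<noteq> j}"
    unfolding tight_Em_def by auto
  moreover have "tight_Ep m \<inter> tight_Em m = {}"
    unfolding tight_Ep_def tight_Em_def by (auto simp: doubleton_eq_iff)
  ultimately show ?thesis using assms unfolding valid_instance_def by blast
qed

lemma group_set: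
  fixes m g :: nat
  assumes m: "m \<ge> 1" and g: "g < m"
  shows "{j. j < m^2 \<and> j div m = g} = {g*m..<g*m+m}"
proof -
  have iff: "j div m = g \<longleftrightarrow> g*m \<le> j \<and> j < g*m+m" for j
  proof
    assume d: "j div m = g"
    have e: "g*m + j mod m = j" using d div_mult_mod_eq[of j m] by simp
    have "j mod m < m" using m by simp
    then show "g*m \<le> j \<and> j < g*m+m" using e by linarith
  next
    assume "g*m \<le> j \<and> j < g*m+m"
    then show "j div m = g" by (intro div_nat_eqI) (auto simp: algebra_simps)
  qed
  have bnd: "g*m + m \<le> m^2"
  proof -
    have "g*m + m = (g+1)*m" by simp
    also have "\<dots> \<le> m*m" using g by (intro mult_right_mono) auto
    finally show ?thesis by (simp add: power2_eq_square)
  qed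
  show ?thesis
  proof (rule set_eqI)
    fix j show "j \<in> {j. j < m^2 \<and> j div m = g} \<longleftrightarrow> j \<in> {g*m..<g*m+m}"
      using iff[of j] bnd by auto
  qed
qed

lemma card_group: "(m::nat) \<ge> 1 \<Longrightarrow> g < m \<Longrightarrow> card {j. j < m^2 \<and> j div m = g} = m"
  by (simp add: group_set)

lemma div_lt: "(i::nat) < m^2 \<Longrightarrow> i div m < m"
  by (rule less_mult_imp_div_less) (simp add: power2_eq_square)

lemma card_other: fixes m g :: nat assumes "m \<ge> 1" "g < m" shows "card {j. j < m^2 \<and> g \<noteq> j div m} = m^2 - m"
proof -
  have e: "{j. j < m^2 \<and> g \<noteq> j div m} = {..<m^2} - {j. j < m^2 \<and> j div m = g}" by auto
  have "card ({..<m^2} - {j. j < m^2 \<and> j div m = g}) = card {..<m^2} - card {j. j < m^2 \<and> j div m = g}"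
    by (rule card_Diff_subset) auto
  then show ?thesis using card_group[OF assms] e by simp
qed

lemma card_same: fixes m i :: nat assumes "m \<ge> 1" "i < m^2"
  shows "card {j. j < m^2 \<and> i \<noteq> j \<and> i div m = j div m} = m - 1"
proof -
  have "{j. j < m^2 \<and> i \<noteq> j \<and> i div m = j div m} = {j. j < m^2 \<and> j div m = i div m} - {i}" by auto
  then show ?thesis using card_group[OF assms(1) div_lt[OF assms(2)]] assms by simp
qed


lemma Tpl_tight:
  assumes m: "m \<ge> 1" and a: "\<alpha> > 0" "\<beta> \<ge> 0" "\<gamma> \<ge> 0" and i: "i < m^2"
  shows "Tpl (m^2) m (tight_Ep m) (tight_Em m) \<alpha> \<beta> \<gamma> i
     = (real m - 1)*\<alpha> + real m^2*\<alpha> + \<beta>*(real m^2 - real m) + \<gamma>*(real m - 1)*(real m - 1)"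
proof -
  have v: "valid_instance (m^2) m (tight_Ep m) (tight_Em m) \<alpha> \<beta> \<gamma>" using tight_valid m a by blast
  have ns: "{i} \<notin> tight_Em m" "{i} \<notin> tight_Ep m" using noself[OF v] by auto
  have "Tpl (m^2) m (tight_Ep m) (tight_Em m) \<alpha> \<beta> \<gamma> i =
     (\<Sum>j<m^2. (real m - 1)*\<alpha>*ind (j = i) + \<alpha> + \<beta> * ind ({i,j}\<in>tight_Em m) + \<gamma> * (real m - 1) * ind ({i,j}\<in>tight_Ep m))"
    unfolding Tpl_def
  proof (rule sum.cong[OF refl])
    fix j assume "j \<in> {..<m^2}"
    show "(if j = i then real m * \<alpha> else \<alpha> + \<beta> * ind ({i,j}\<in>tight_Em m) + \<gamma> * (real m - 1) * ind ({i,j}\<in>tight_Ep m))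
      = (real m - 1)*\<alpha>*ind (j = i) + \<alpha> + \<beta> * ind ({i,j}\<in>tight_Em m) + \<gamma> * (real m - 1) * ind ({i,j}\<in>tight_Ep m)"
    proof (cases "j = i")
      case True
      then show ?thesis using ns by (simp add: ind_def algebra_simps)
    qed (simp add: ind_def)
  qed
  also have "\<dots> = (real m - 1)*\<alpha> + real m^2*\<alpha> + \<beta>*(\<Sum>j<m^2. ind ({i,j}\<in>tight_Em m)) + \<gamma>*(real m - 1)*(\<Sum>j<m^2. ind ({i,j}\<in>tight_Ep m))"
  proof -
    have "(\<Sum>j<m^2. ind (j = i)) = 1" using i by (simp add: ind_def)
    then have "(\<Sum>j<m^2. (real m - 1)*\<alpha>*ind (j = i)) = (real m - 1)*\<alpha>"
      by (simp add: sum_distrib_left[symmetric])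
    then show ?thesis by (simp add: sum.distrib sum_distrib_left)
  qed
  also have "(\<Sum>j<m^2. ind ({i,j}\<in>tight_Em m)) = (\<Sum>j<m^2. ind (i div m \<noteq> j div m))"
    using i by (intro sum.cong refl) (auto simp: tight_Em_iff)
  also have "\<dots> = real m^2 - real m"
  proof -
    have c: "card {j. j < m^2 \<and> i div m \<noteq> j div m} = m^2 - m" by (rule card_other[OF m div_lt[OF i]])
    have mm: "m \<le> m^2" by (simp add: power2_eq_square)
    have "(\<Sum>j<m^2. ind (i div m \<noteq> j div m)) = real (card {j. j < m^2 \<and> i div m \<noteq> j div m})"
      by (rule card_ind[symmetric])
    also have "\<dots> = real (m^2) - real m" unfolding c using mm by (rule of_nat_diff)
    finally show ?thesis by simp
  qed
  also have "(\<Sum>j<m^2. ind ({i,j}\<in>tight_Ep m)) = (\<Sum>j<m^2. ind (i \<noteq> j \<and> i div m = j div m))"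
    using i by (intro sum.cong refl) (auto simp: tight_Ep_iff)
  also have "\<dots> = real m - 1"
  proof -
    have c: "card {j. j < m^2 \<and> i \<noteq> j \<and> i div m = j div m} = m - 1" by (rule card_same[OF m i])
    have "(\<Sum>j<m^2. ind (i \<noteq> j \<and> i div m = j div m)) = real (card {j. j < m^2 \<and> i \<noteq> j \<and> i div m = j div m})"
      by (rule card_ind[symmetric])
    also have "\<dots> = real m - 1" unfolding c using m by (simp add: of_nat_diff)
    finally show ?thesis .
  qed
  finally show ?thesis by simp
qed


lemma tight_opt:
  assumes m: "m \<ge> 1" and a: "\<alpha> > 0" "\<beta> \<ge> 0" "\<gamma> \<ge> 0"
  shows "opt_cost (m^2) m (tight_Ep m) (tight_Em m) \<alpha> \<beta> \<gamma> = \<alpha> * real m ^ 3"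
proof -
  have v: "valid_instance (m^2) m (tight_Ep m) (tight_Em m) \<alpha> \<beta> \<gamma>" using tight_valid m a by blast
  have mp: "real m > 0" using m by auto
  have lower: "\<alpha> * real m ^ 3 \<le> social_cost (m^2) (tight_Ep m) (tight_Em m) \<alpha> \<beta> \<gamma> t"
    if t: "t \<in> states (m^2) m" for t
  proof -
    have S: "real (m^2) ^ 2 \<le> real m * Sx (m^2) t" by (rule S_bound[OF t m])
    have "real m * (real m ^ 3) \<le> real m * Sx (m^2) t"
      using S by (simp add: power_mult_distrib power2_eq_square power3_eq_cube mult_ac)
    then have S3: "real m ^ 3 \<le> Sx (m^2) t" using mp by simp
    have "\<alpha> * real m ^ 3 \<le> \<alpha> * Sx (m^2) t" using S3 a by simp
    also have "\<dots> \<le> \<alpha> * Sx (m^2) t + \<beta> * Cx (m^2) (tight_Em m) t + \<gamma> * Fx (m^2) (tight_Ep m) t"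
      using CF_nonneg[of "m^2" "tight_Em m" t] CF_nonneg[of "m^2" "tight_Ep m" t] a by simp
    finally show ?thesis by (simp add: social_decomp)
  qed
  define t0 where "t0 = restrict (\<lambda>j. j div m) {..<m^2}"
  have t0: "t0 \<in> states (m^2) m" unfolding t0_def states_def by (auto simp: div_lt)
  have pc: "pcost (m^2) (tight_Ep m) (tight_Em m) \<alpha> \<beta> \<gamma> t0 i = \<alpha> * real m" if i: "i < m^2" for i
  proof -
    have "pcost (m^2) (tight_Ep m) (tight_Em m) \<alpha> \<beta> \<gamma> t0 i = (\<Sum>j<m^2. \<alpha> * ind (j div m = i div m))"
      unfolding pcost_sum
    proof (rule sum.cong[OF refl])
      fix j assume "j \<in> {..<m^2}"
      then have j: "j < m^2" by simp
      show "\<alpha> * ind (t0 j = t0 i) + \<beta> * ind (t0 j = t0 i \<and> {i, j} \<in> tight_Em m) +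
          \<gamma> * ind (t0 j \<noteq> t0 i \<and> {i, j} \<in> tight_Ep m) = \<alpha> * ind (j div m = i div m)"
        using i j by (simp add: t0_def tight_Em_iff tight_Ep_iff ind_def)
    qed
    also have "\<dots> = \<alpha> * real (card {j. j < m^2 \<and> j div m = i div m})"
      by (simp add: card_ind sum_distrib_left)
    also have "\<dots> = \<alpha> * real m" using card_group[OF m div_lt[OF i]] by simp
    finally show ?thesis .
  qed
  have s0: "social_cost (m^2) (tight_Ep m) (tight_Em m) \<alpha> \<beta> \<gamma> t0 = \<alpha> * real m ^ 3"
    unfolding social_cost_def using pc by (simp add: power3_eq_cube power2_eq_square mult_ac)
  obtain t where t: "t \<in> states (m^2) m" and ot: "opt_cost (m^2) m (tight_Ep m) (tight_Em m) \<alpha> \<beta> \<gamma> = social_cost (m^2) (tight_Ep m) (tight_Em m) \<alpha> \<beta> \<gamma> t"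
    using opt_props(1)[OF m] by blast
  have "opt_cost (m^2) m (tight_Ep m) (tight_Em m) \<alpha> \<beta> \<gamma> \<le> \<alpha> * real m ^ 3"
    using opt_props(2)[OF m t0, of "tight_Ep m" "tight_Em m" \<alpha> \<beta> \<gamma>] s0 by linarith
  moreover have "\<alpha> * real m ^ 3 \<le> opt_cost (m^2) m (tight_Ep m) (tight_Em m) \<alpha> \<beta> \<gamma>"
    using lower[OF t] ot by simp
  ultimately show ?thesis by linarith
qed

lemma part_ii:
  assumes "1 \<le> m \<and> \<alpha> > 0 \<and> \<beta> \<ge> 0 \<and> \<gamma> \<ge> 0 \<and> \<alpha> \<ge> \<gamma>"
  shows "(let n = m^2; Ep = tight_Ep m; Em = tight_Em m; \<sigma> = (\<lambda>i k. 1 / real m) in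
        valid_instance n m Ep Em \<alpha> \<beta> \<gamma> \<and>
        is_mixed_NE n m Ep Em \<alpha> \<beta> \<gamma> \<sigma> \<and>
        expected n m (product_dist n \<sigma>) (social_cost n Ep Em \<alpha> \<beta> \<gamma>)
          = Lam n m \<alpha> \<beta> \<gamma> * opt_cost n m Ep Em \<alpha> \<beta> \<gamma>)"
proof -
  have m: "m \<ge> 1" and a: "\<alpha> > 0" "\<beta> \<ge> 0" "\<gamma> \<ge> 0" using assms by auto
  have v: "valid_instance (m^2) m (tight_Ep m) (tight_Em m) \<alpha> \<beta> \<gamma>" using tight_valid m a by blast
  have mp: "real m > 0" using m by auto
  define X where "X = (real m - 1)*\<alpha> + real m^2*\<alpha> + \<beta>*(real m^2 - real m) + \<gamma>*(real m - 1)*(real m - 1)"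
  have ts: "(\<Sum>i<m^2. Tpl (m^2) m (tight_Ep m) (tight_Em m) \<alpha> \<beta> \<gamma> i) = real m ^ 2 * X"
  proof -
    have "(\<Sum>i<m^2. Tpl (m^2) m (tight_Ep m) (tight_Em m) \<alpha> \<beta> \<gamma> i) = (\<Sum>i<m^2. X)"
      unfolding X_def using Tpl_tight[OF m a] by (intro sum.cong refl) auto
    then show ?thesis by simp
  qed
  have eq: "real m ^ 2 * X / real m = Lam (m^2) m \<alpha> \<beta> \<gamma> * (\<alpha> * real m ^ 3)"
    unfolding X_def Lam_def using mp a by (simp add: field_simps power2_eq_square power3_eq_cube)
  show ?thesis
    unfolding Let_def
    using v uniform_props[OF v] ts eq tight_opt[OF m a] by simp
qed

theorem theorem11:
  shows
  "(\<forall>n m Ep Em \<alpha> \<beta> \<gamma>. valid_instance n m Ep Em \<alpha> \<beta> \<gamma> \<and> \<alpha> \<ge> \<gamma> \<longrightarrow>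
      semi_smooth n m Ep Em \<alpha> \<beta> \<gamma> (Lam n m \<alpha> \<beta> \<gamma>) 0 \<and>
      PoTA_le n m Ep Em \<alpha> \<beta> \<gamma> (Lam n m \<alpha> \<beta> \<gamma>))
   \<and>
   (\<forall>m \<alpha> \<beta> \<gamma>. 1 \<le> m \<and> \<alpha> > 0 \<and> \<beta> \<ge> 0 \<and> \<gamma> \<ge> 0 \<and> \<alpha> \<ge> \<gamma> \<longrightarrow>
      (let n = m^2; Ep = tight_Ep m; Em = tight_Em m; \<sigma> = (\<lambda>i k. 1 / real m) in
        valid_instance n m Ep Em \<alpha> \<beta> \<gamma> \<and>
        is_mixed_NE n m Ep Em \<alpha> \<beta> \<gamma> \<sigma> \<and>
        expected n m (product_dist n \<sigma>) (social_cost n Ep Em \<alpha> \<beta> \<gamma>)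
          = Lam n m \<alpha> \<beta> \<gamma> * opt_cost n m Ep Em \<alpha> \<beta> \<gamma>))
   \<and>
   (\<forall>n m Ep Em \<alpha> \<beta> \<gamma>. valid_instance n m Ep Em \<alpha> \<beta> \<gamma> \<and> \<alpha> < \<gamma> \<longrightarrow>
      semi_smooth n m Ep Em \<alpha> \<beta> \<gamma>
        (1 + \<beta> / \<alpha> * ((real m - 1) / real m) + \<gamma> / \<alpha> * ((real m - 1) / real m)) 0)"
  using part_i part_ii part_iii by blast

end
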